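(* Identify $\mathbb{R}^2$ with $\mathbb{C}$, let $\tau=\frac{1+\sqrt5}{2}$, $\xi=e^{i\pi/5}$, $\alpha_1=1$, $\alpha_2=e^{4\pi i/5}$, $\alpha_H=\tau(\alpha_1+\alpha_2)$. Let $r_1,r_2:\mathbb{C}\to\mathbb{C}$ be $r_j(v)=v-2\,\mathrm{Re}(v\overline{\alpha_j})\,\alpha_j$ (reflection in the line through $0$ orthogonal to $\alpha_j$), and $T(v)=v+\alpha_H$. For $n\in\mathbb{N}_0$ let $Q_2(n)$ be the set of all points $w(0)$, where $w$ ranges over all finite compositions of the maps $T,r_1,r_2$ (including the empty composition) in which $T$ occurs at most $n$ times. Then $$Q_2(n)=\Big\{\sum_{j=0}^9 n_j\xi^j \;\Big|\; n_j\in\mathbb{N}_0,\ \sum_{j=0}^9 n_j=l\le n\Big\}.$$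
   Context: $\mathbb{N}_0$ denotes the nonnegative integers. Note $\alpha_H=e^{2\pi i/5}$ has length $1$, and $\{\xi^j: 0\le j\le 9\}$ is the root system of the Coxeter group $H_2$ (dihedral group of order 10) generated by $r_1,r_2$. *)

theory Defs
  imports Complex_Main
begin

definition tau :: real where "tau = (1 + sqrt 5) / 2"
definition xi :: complex where "xi = cis (pi / 5)"
definition alpha1 :: complex where "alpha1 = 1"
definition alpha2 :: complex where "alpha2 = cis (4 * pi / 5)"
definition alphaH :: complex where "alphaH = of_real tau * (alpha1 + alpha2)"

definition refl :: "complex \<Rightarrow> complex \<Rightarrow> complex" where
  "refl a v = v - of_real (2 * Re (v * cnj a)) * a"

definition r1 :: "complex \<Rightarrow> complex" where "r1 = refl alpha1"
definition r2 :: "complex \<Rightarrow> complex" where "r2 = refl alpha2"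
definition Tr :: "complex \<Rightarrow> complex" where "Tr v = v + alphaH"

datatype gen = GT | GR1 | GR2

fun gen_map :: "gen \<Rightarrow> complex \<Rightarrow> complex" where
  "gen_map GT = Tr"
| "gen_map GR1 = r1"
| "gen_map GR2 = r2"

definition word_map :: "gen list \<Rightarrow> complex \<Rightarrow> complex" where
  "word_map w = foldr (\<lambda>g f. gen_map g \<circ> f) w id"

definition Q2 :: "nat \<Rightarrow> complex set" where
  "Q2 n = {word_map w 0 | w. count_list w GT \<le> n}"

end

theory Submission
  imports Defs
begin

lemma sum10: "(\<Sum>j<(10::nat). f j) = f 0 + f 1 + f 2 + f 3 + f 4 + f 5 + f 6 + f 7 + f 8 + (f 9 :: 'a::comm_monoid_add)"
  by (simp add: eval_nat_numeral ac_simps)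

lemma xi5: "xi^5 = -1" unfolding xi_def by (simp add: DeMoivre)

lemma xi10: "xi^10 = 1"
proof -
  have "xi^10 = (xi^5)^2" by (simp flip: power_mult)
  thus ?thesis by (simp add: xi5)
qed

lemma xi_mod: "xi^n = xi^(n mod 10)"
proof -
  have "xi^n = xi^(10 * (n div 10) + n mod 10)" by simp
  also have "\<dots> = (xi^10)^(n div 10) * xi^(n mod 10)" by (simp only: power_add power_mult)
  finally show ?thesis by (simp add: xi10)
qed

lemma norm_xi: "norm xi = 1" unfolding xi_def by simp

lemma xi_cnj: "xi^i * cnj (xi^i) = 1"
proof -
  have "of_real ((norm (xi^i))^2) = xi^i * cnj (xi^i)" by (rule complex_norm_square)
  thus ?thesis by (simp add: norm_power norm_xi)
qed

lemma xi_sub: "i \<le> k \<Longrightarrow> xi^(k-i) = xi^k * cnj (xi^i)"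
proof -
  assume "i \<le> k"
  hence h: "xi^k = xi^(k-i) * xi^i" by (simp flip: power_add)
  have "xi^k * cnj (xi^i) = xi^(k-i) * (xi^i * cnj (xi^i))" by (subst h) (simp only: mult.assoc)
  also have "\<dots> = xi^(k-i)" by (simp only: xi_cnj mult_1_right)
  finally show ?thesis by simp
qed

lemma alpha2_eq: "alpha2 = xi^4"
  unfolding alpha2_def xi_def by (simp add: DeMoivre)

lemma r1_eq: "r1 v = xi^5 * cnj v"
  unfolding r1_def refl_def alpha1_def xi5 by (simp add: complex_eq_iff)

lemma r2_eq: "r2 v = xi^13 * cnj v"
proof -
  define a where "a = xi^4"
  have ca: "a * cnj a = 1" unfolding a_def by (rule xi_cnj)
  have a2: "a * a = (-1) * xi^13"
  proof -
    have "a * a = xi^8" unfolding a_def by (simp flip: power_add)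
    also have "xi^13 = xi^5 * xi^8" by (simp flip: power_add)
    ultimately show ?thesis by (simp add: xi5)
  qed
  have "complex_of_real (2 * Re (v * cnj a)) = v * cnj a + cnj (v * cnj a)"
    by (simp only: complex_add_cnj)
  hence "r2 v = v - (v * cnj a + cnj v * a) * a"
    unfolding r2_def refl_def alpha2_eq a_def by simp
  also have "\<dots> = xi^13 * cnj v" using ca a2 by algebra
  finally show ?thesis .
qed


lemma cnj_xi: "cnj xi = xi^9"
  using xi_sub[of 1 10] by (simp add: xi10)

lemma Re_xi: "Re xi = cos (pi/5)" unfolding xi_def by simp

lemma P_xi: "xi^4 - xi^3 + xi^2 - xi + 1 = 0"
proof -
  have "cos (pi/5) > 0" by (rule cos_gt_zero_pi) (use pi_gt_zero in linarith)+
  have ne: "xi + 1 \<noteq> 0"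
  proof
    assume "xi + 1 = 0"
    hence "xi = -1" by algebra
    hence "Re xi = Re (-1)" by (rule arg_cong)
    hence "Re xi = -1" by simp
    with \<open>cos (pi/5) > 0\<close> show False using Re_xi by simp
  qed
  have "(xi + 1) * (xi^4 - xi^3 + xi^2 - xi + 1) = xi^5 + 1" by algebra
  also have "\<dots> = 0" by (simp add: xi5)
  finally show ?thesis using ne by simp
qed

lemma tau_xi: "complex_of_real tau = xi + xi^9"
proof -
  define c where "c = 2 * cos (pi/5)"
  have cc: "complex_of_real c = xi + xi^9"
    unfolding c_def using complex_add_cnj[of xi] by (simp add: cnj_xi Re_xi)
  have "complex_of_real (c^2 - c - 1) = (xi + xi^9)^2 - (xi + xi^9) - 1"
    by (simp add: cc)
  also have "\<dots> = 0" using xi5 P_xi by algebra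
  finally have q: "c^2 - c - 1 = 0" by (simp only: of_real_eq_0_iff)
  have "cos (pi/5) > 0" by (rule cos_gt_zero_pi) (use pi_gt_zero in linarith)+
  hence cpos: "c > 0" unfolding c_def by simp
  have s5: "sqrt 5 ^ 2 = (5::real)" by simp
  have "(c - tau) * (c - (1 - sqrt 5)/2) = c^2 - c - (5 - sqrt 5 ^ 2)/4 - 1"
    unfolding tau_def by (simp add: field_simps power2_eq_square)
  also have "\<dots> = 0" using q by (simp only: s5) simp
  finally have "c = tau \<or> c = (1 - sqrt 5)/2" by simp
  moreover have "(1 - sqrt 5)/2 < 0"
    by (simp add: real_less_rsqrt)
  hence "c \<noteq> (1 - sqrt 5)/2" using cpos by linarith
  ultimately have "c = tau" by blast
  thus ?thesis using cc by simp
qed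

lemma alphaH_eq: "alphaH = xi^2"
proof -
  have "alphaH = (xi + xi^9) * (1 + xi^4)"
    unfolding alphaH_def alpha1_def alpha2_eq tau_xi by simp
  also have "\<dots> = xi^2" using xi5 P_xi by algebra
  finally show ?thesis .
qed


lemma wm_Cons: "word_map (g # w) x = gen_map g (word_map w x)"
  by (simp add: word_map_def)

lemma Q2_0: "0 \<in> Q2 k"
  unfolding Q2_def by (rule CollectI, rule exI[of _ "[]"]) (simp add: word_map_def)

lemma Q2_r1: "x \<in> Q2 k \<Longrightarrow> r1 x \<in> Q2 (k)"
proof -
  assume "x \<in> Q2 k"
  then obtain w where w: "x = word_map w 0" "count_list w GT \<le> k" unfolding Q2_def by blast
  have "r1 x = word_map (GR1 # w) 0" using w by (simp add: wm_Cons)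
  moreover have "count_list (GR1 # w) GT \<le> k" using w by simp
  ultimately show ?thesis unfolding Q2_def by blast
qed

lemma Q2_r2: "x \<in> Q2 k \<Longrightarrow> r2 x \<in> Q2 (k)"
proof -
  assume "x \<in> Q2 k"
  then obtain w where w: "x = word_map w 0" "count_list w GT \<le> k" unfolding Q2_def by blast
  have "r2 x = word_map (GR2 # w) 0" using w by (simp add: wm_Cons)
  moreover have "count_list (GR2 # w) GT \<le> k" using w by simp
  ultimately show ?thesis unfolding Q2_def by blast
qed

lemma Q2_T: "x \<in> Q2 k \<Longrightarrow> x + xi^2 \<in> Q2 (Suc k)"
proof -
  assume "x \<in> Q2 k"
  then obtain w where w: "x = word_map w 0" "count_list w GT \<le> k" unfolding Q2_def by blast
  have "x + xi^2 = word_map (GT # w) 0" using w by (simp add: wm_Cons Tr_def alphaH_eq)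
  moreover have "count_list (GT # w) GT \<le> Suc k" using w by simp
  ultimately show ?thesis unfolding Q2_def by blast
qed

lemma Q2_mono: "k \<le> n \<Longrightarrow> Q2 k \<subseteq> Q2 n"
  unfolding Q2_def by auto

lemma r1_add: "r1 (x + y) = r1 x + r1 y" by (simp add: r1_eq algebra_simps)
lemma r2_add: "r2 (x + y) = r2 x + r2 y" by (simp add: r2_eq algebra_simps)

lemma r1_r1: "r1 (r1 x) = x"
proof -
  have "r1 (r1 x) = (xi^5 * cnj (xi^5)) * x" by (simp add: r1_eq)
  thus ?thesis by (simp only: xi_cnj mult_1_left)
qed

lemma r2_r2: "r2 (r2 x) = x"
proof -
  have "r2 (r2 x) = (xi^13 * cnj (xi^13)) * x" by (simp add: r2_eq)
  thus ?thesis by (simp only: xi_cnj mult_1_left)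
qed

lemma r1_pow: "i < 10 \<Longrightarrow> r1 (xi^i) = xi^((15-i) mod 10)"
proof -
  assume "i < 10"
  have "xi^((15-i) mod 10) = xi^(15-i)" by (rule xi_mod[symmetric])
  also have "\<dots> = xi^15 * cnj (xi^i)" using \<open>i < 10\<close> by (intro xi_sub) simp
  also have "xi^15 = xi^5" using xi_mod[of 15] by simp
  finally show ?thesis by (simp add: r1_eq)
qed

lemma r2_pow: "i < 10 \<Longrightarrow> r2 (xi^i) = xi^((13-i) mod 10)"
proof -
  assume "i < 10"
  have "xi^((13-i) mod 10) = xi^(13-i)" by (rule xi_mod[symmetric])
  also have "\<dots> = xi^13 * cnj (xi^i)" using \<open>i < 10\<close> by (intro xi_sub) simp
  finally show ?thesis by (simp add: r2_eq)
qed

definition S :: "nat \<Rightarrow> bool" where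
  "S j \<longleftrightarrow> (\<forall>k x. x \<in> Q2 k \<longrightarrow> x + xi^j \<in> Q2 (Suc k))"

lemma S2: "S 2" unfolding S_def using Q2_T by blast

lemma S_r1: "S j \<Longrightarrow> j < 10 \<Longrightarrow> S ((15-j) mod 10)"
  unfolding S_def
proof (intro allI impI)
  fix k x assume h: "\<forall>k x. x \<in> Q2 k \<longrightarrow> x + xi ^ j \<in> Q2 (Suc k)" and j: "j < 10"
    and x: "x \<in> Q2 k"
  have "r1 (r1 x + xi^j) \<in> Q2 (Suc k)" using h Q2_r1[OF x] Q2_r1 by blast
  also have "r1 (r1 x + xi^j) = x + xi^((15-j) mod 10)"
    by (simp add: r1_add r1_r1 r1_pow j)
  finally show "x + xi^((15-j) mod 10) \<in> Q2 (Suc k)" .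
qed

lemma S_r2: "S j \<Longrightarrow> j < 10 \<Longrightarrow> S ((13-j) mod 10)"
  unfolding S_def
proof (intro allI impI)
  fix k x assume h: "\<forall>k x. x \<in> Q2 k \<longrightarrow> x + xi ^ j \<in> Q2 (Suc k)" and j: "j < 10"
    and x: "x \<in> Q2 k"
  have "r2 (r2 x + xi^j) \<in> Q2 (Suc k)" using h Q2_r2[OF x] Q2_r2 by blast
  also have "r2 (r2 x + xi^j) = x + xi^((13-j) mod 10)"
    by (simp add: r2_add r2_r2 r2_pow j)
  finally show "x + xi^((13-j) mod 10) \<in> Q2 (Suc k)" .
qed

lemma S_all: "j < 10 \<Longrightarrow> S j"
proof -
  assume j: "j < 10"
  have S3: "S 3" using S_r1[OF S2] by simp
  have S1: "S 1" using S_r2[OF S2] by simp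
  have S0: "S 0" using S_r2[OF S3] by simp
  have S5: "S 5" using S_r1[OF S0] by simp
  have S4: "S 4" using S_r1[OF S1] by simp
  have S9: "S 9" using S_r2[OF S4] by simp
  have S8: "S 8" using S_r2[OF S5] by simp
  have S6: "S 6" using S_r1[OF S9] by simp
  have S7: "S 7" using S_r1[OF S8] by simp
  have "j = 0 \<or> j = 1 \<or> j = 2 \<or> j = 3 \<or> j = 4 \<or> j = 5 \<or> j = 6 \<or> j = 7 \<or> j = 8 \<or> j = 9"
    using j by arith
  thus ?thesis using S0 S1 S2 S3 S4 S5 S6 S7 S8 S9 by blast
qed


lemma sup_dir: "(\<Sum>j<10. m j) = N \<Longrightarrow> (\<Sum>j<10. of_nat (m j) * xi ^ j) \<in> Q2 N"
proof (induction N arbitrary: m)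
  case 0
  hence "\<forall>j\<in>{..<10}. m j = 0" by simp
  hence "(\<Sum>j<10. of_nat (m j) * xi ^ j) = (0::complex)" by simp
  thus ?case using Q2_0 by simp
next
  case (Suc N)
  have "\<exists>j<10. m j > 0"
  proof (rule ccontr)
    assume "\<not> (\<exists>j<10. m j > 0)"
    hence "\<forall>j\<in>{..<10}. m j = 0" by simp
    hence "(\<Sum>j<10. m j) = 0" by simp
    with Suc.prems show False by simp
  qed
  then obtain j where j: "j < 10" "m j > 0" by blast
  define m' where "m' = m(j := m j - 1)"
  have jA: "j \<in> {..<(10::nat)}" using j by simp
  have eqA: "\<And>f::nat \<Rightarrow> 'a::comm_monoid_add. (\<Sum>i<10. f i) = f j + (\<Sum>i\<in>{..<10} - {j}. f i)"
    using jA by (simp add: sum.remove)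
  have rest1: "(\<Sum>i\<in>{..<10} - {j}. m' i) = (\<Sum>i\<in>{..<10} - {j}. m i)"
    by (rule sum.cong) (auto simp: m'_def)
  have rest2: "(\<Sum>i\<in>{..<10} - {j}. of_nat (m' i) * xi ^ i) = (\<Sum>i\<in>{..<10} - {j}. of_nat (m i) * xi ^ i)"
    by (rule sum.cong) (auto simp: m'_def)
  have "(\<Sum>i<10. m' i) = N"
    using Suc.prems eqA[of m] eqA[of m'] rest1 j by (simp add: m'_def)
  hence IH: "(\<Sum>i<10. of_nat (m' i) * xi ^ i) \<in> Q2 N" by (rule Suc.IH)
  have "S j" by (rule S_all[OF j(1)])
  hence "(\<Sum>i<10. of_nat (m' i) * xi ^ i) + xi^j \<in> Q2 (Suc N)" using IH unfolding S_def by blast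
  also have "(\<Sum>i<10. of_nat (m' i) * xi ^ i) + xi^j = (\<Sum>i<10. of_nat (m i) * xi ^ i)"
  proof -
    have mj: "m j = Suc (m' j)" using j by (simp add: m'_def)
    have "of_nat (m j) * xi^j = xi^j + of_nat (m' j) * xi^j" by (simp add: mj algebra_simps)
    thus ?thesis using eqA[of "\<lambda>i. of_nat (m i) * xi ^ i"] eqA[of "\<lambda>i. of_nat (m' i) * xi ^ i"] rest2
      by (simp add: algebra_simps)
  qed
  finally show ?case .
qed

lemma r1_lin: "r1 (\<Sum>j<10. of_nat (m j) * xi ^ j) = (\<Sum>j<10. of_nat (m j) * r1 (xi ^ j))"
  by (simp add: r1_eq sum_distrib_left ac_simps)

lemma r2_lin: "r2 (\<Sum>j<10. of_nat (m j) * xi ^ j) = (\<Sum>j<10. of_nat (m j) * r2 (xi ^ j))"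
  by (simp add: r2_eq sum_distrib_left ac_simps)

lemma ten_cases: "(j::nat) < 10 \<Longrightarrow> j = 0 \<or> j = 1 \<or> j = 2 \<or> j = 3 \<or> j = 4 \<or> j = 5 \<or> j = 6 \<or> j = 7 \<or> j = 8 \<or> j = 9"
  by arith

lemma inv_gen: "c = 13 \<or> c = 15 \<Longrightarrow> j < 10 \<Longrightarrow> (c - (c - j) mod 10) mod 10 = (j::nat)"
  by (drule ten_cases, elim disjE; simp)+

lemma bij_gen: "c = 13 \<or> c = 15 \<Longrightarrow> bij_betw (\<lambda>j. (c - j) mod 10) {..<10::nat} {..<10}"
  by (rule bij_betw_byWitness[where f'="\<lambda>j. (c - j) mod 10"]) (auto simp: inv_gen)

lemma reidx: "c = 13 \<or> c = 15 \<Longrightarrow> (\<Sum>j<10. f ((c - j) mod 10)) = (\<Sum>j<10::nat. f j)"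
  using sum.reindex_bij_betw[OF bij_gen] by blast

lemma reidx2: "c = 13 \<or> c = 15 \<Longrightarrow>
   (\<Sum>j<10. of_nat (m j) * xi ^ ((c - j) mod 10)) = (\<Sum>j<10::nat. of_nat (m ((c - j) mod 10)) * xi ^ j)"
proof -
  assume c: "c = 13 \<or> c = 15"
  have "(\<Sum>j<10::nat. of_nat (m ((c - j) mod 10)) * xi ^ j)
      = (\<Sum>j<10::nat. of_nat (m ((c - (c - j) mod 10) mod 10)) * xi ^ ((c - j) mod 10))"
    using reidx[OF c, of "\<lambda>j. of_nat (m ((c - j) mod 10)) * xi ^ j"] by simp
  also have "\<dots> = (\<Sum>j<10. of_nat (m j) * xi ^ ((c - j) mod 10))"
    by (rule sum.cong) (simp_all add: inv_gen[OF c])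
  finally show ?thesis by simp
qed

lemma sub_dir: "\<exists>m. (\<Sum>j<10. m j) = count_list w GT \<and> word_map w 0 = (\<Sum>j<10. of_nat (m j) * xi ^ j)"
proof (induction w)
  case Nil
  show ?case by (rule exI[of _ "\<lambda>_. 0"]) (simp add: word_map_def)
next
  case (Cons g w)
  then obtain m where m: "(\<Sum>j<10. m j) = count_list w GT" "word_map w 0 = (\<Sum>j<10. of_nat (m j) * xi ^ j)"
    by blast
  show ?case
  proof (cases g)
    case GT
    let ?m = "m(2 := m 2 + 1)"
    have "(\<Sum>j<10. ?m j) = count_list (g # w) GT" using m GT by (simp add: sum10)
    moreover have "word_map (g # w) 0 = (\<Sum>j<10. of_nat (?m j) * xi ^ j)"
      using m GT by (simp add: wm_Cons Tr_def alphaH_eq sum10 algebra_simps)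
    ultimately show ?thesis by blast
  next
    case GR1
    let ?m = "\<lambda>j. m ((15 - j) mod 10)"
    have "(\<Sum>j<10. ?m j) = count_list (g # w) GT" using m GR1 reidx[of 15 m] by simp
    moreover have "word_map (g # w) 0 = (\<Sum>j<10. of_nat (?m j) * xi ^ j)"
    proof -
      have "word_map (g # w) 0 = (\<Sum>j<10. of_nat (m j) * r1 (xi ^ j))"
        using m GR1 by (simp add: wm_Cons r1_lin)
      also have "\<dots> = (\<Sum>j<10. of_nat (m j) * xi ^ ((15 - j) mod 10))"
        by (rule sum.cong) (simp_all add: r1_pow)
      also have "\<dots> = (\<Sum>j<10. of_nat (?m j) * xi ^ j)"
        by (rule reidx2) simp
      finally show ?thesis .
    qed
    ultimately show ?thesis by blast
  next
    case GR2
    let ?m = "\<lambda>j. m ((13 - j) mod 10)"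
    have "(\<Sum>j<10. ?m j) = count_list (g # w) GT" using m GR2 reidx[of 13 m] by simp
    moreover have "word_map (g # w) 0 = (\<Sum>j<10. of_nat (?m j) * xi ^ j)"
    proof -
      have "word_map (g # w) 0 = (\<Sum>j<10. of_nat (m j) * r2 (xi ^ j))"
        using m GR2 by (simp add: wm_Cons r2_lin)
      also have "\<dots> = (\<Sum>j<10. of_nat (m j) * xi ^ ((13 - j) mod 10))"
        by (rule sum.cong) (simp_all add: r2_pow)
      also have "\<dots> = (\<Sum>j<10. of_nat (?m j) * xi ^ j)"
        by (rule reidx2) simp
      finally show ?thesis .
    qed
    ultimately show ?thesis by blast
  qed
qed

theorem proposition6p1:
  fixes n :: nat
  shows "Q2 n = {(\<Sum>j<10. of_nat (m j) * xi ^ j) | m :: nat \<Rightarrow> nat. (\<Sum>j<10. m j) \<le> n}"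
proof
  show "Q2 n \<subseteq> {(\<Sum>j<10. of_nat (m j) * xi ^ j) | m :: nat \<Rightarrow> nat. (\<Sum>j<10. m j) \<le> n}"
  proof
    fix x assume "x \<in> Q2 n"
    then obtain w where w: "x = word_map w 0" "count_list w GT \<le> n" unfolding Q2_def by blast
    obtain m where "(\<Sum>j<10. m j) = count_list w GT \<and> word_map w 0 = (\<Sum>j<10. of_nat (m j) * xi ^ j)"
      using sub_dir by blast
    thus "x \<in> {(\<Sum>j<10. of_nat (m j) * xi ^ j) | m :: nat \<Rightarrow> nat. (\<Sum>j<10. m j) \<le> n}"
      using w by auto
  qed
next
  show "{(\<Sum>j<10. of_nat (m j) * xi ^ j) | m :: nat \<Rightarrow> nat. (\<Sum>j<10. m j) \<le> n} \<subseteq> Q2 n"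
  proof
    fix x assume "x \<in> {(\<Sum>j<10. of_nat (m j) * xi ^ j) | m :: nat \<Rightarrow> nat. (\<Sum>j<10. m j) \<le> n}"
    then obtain m where m: "x = (\<Sum>j<10. of_nat (m j) * xi ^ j)" "(\<Sum>j<10. m j) \<le> n" by blast
    have "x \<in> Q2 (\<Sum>j<10. m j)" unfolding m(1) by (rule sup_dir) simp
    thus "x \<in> Q2 n" using Q2_mono[OF m(2)] by blast
  qed
qed

end
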